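(* Let $V$ be a fixed finite set. If $\mu_1,\mu_2\colon\binom V2\to\mathbb{Z}_+$ satisfy $\mu_1(e)\leqslant\mu_2(e)$ for all $e\in\binom V2$, then $n(\mu_1,V)\leqslant n(\mu_2,V)$.
   Context: For a finite set $V$ with $|V|=n$ and $\mu\colon\binom V2\to\mathbb{Z}_+$, $n(\mu,V)=\sum_{J\subseteq V,|J|\geqslant2}(-1)^{n-|J|}\prod_{e\in\binom J2}\mu(e)+(-1)^{n-1}(n-1)$; this is the number of $(n-1)$-spheres in a wedge homotopy equivalent to the edge inflation $(\Delta_V)_\mu$ of the full simplex on $V$. *)

theory Defs
  imports Main
begin

definition edges2 :: "'a set \<Rightarrow> 'a set set" where
  "edges2 J = {e. e \<subseteq> J \<and> card e = 2}"

definition n_infl :: "('a set \<Rightarrow> nat) \<Rightarrow> 'a set \<Rightarrow> int" where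
  "n_infl \<mu> V =
     (\<Sum>J\<in>{J. J \<subseteq> V \<and> 2 \<le> card J}.
        (-1) ^ (card V - card J) * (\<Prod>e\<in>edges2 J. int (\<mu> e)))
     + (-1) ^ (card V - 1) * (int (card V) - 1)"

end

theory Submission
  imports Defs
begin

lemma alt_pow_sum:
  assumes "finite A"
  shows "(\<Sum>K\<in>Pow A. (-1::int) ^ card K) = (if A = {} then 1 else 0)"
  using assms
proof (induction A rule: finite_induct)
  case empty
  then show ?case by simp
next
  case (insert a A)
  have disj: "Pow A \<inter> insert a ` Pow A = {}" using insert by auto
  have inj: "inj_on (insert a) (Pow A)" using insert
    by (smt (verit, ccfv_threshold) PowD inj_onI insert_ident subset_iff)
  have "(\<Sum>K\<in>insert a ` Pow A. (-1::int) ^ card K) = (\<Sum>K\<in>Pow A. (-1::int) ^ card (insert a K))"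
    by (rule sum.reindex[OF inj, unfolded comp_def])
  also have "\<dots> = (\<Sum>K\<in>Pow A. - ((-1::int) ^ card K))"
  proof (rule sum.cong)
    fix K assume "K \<in> Pow A"
    then have "finite K" "a \<notin> K" using insert finite_subset by auto
    then show "(-1::int) ^ card (insert a K) = - ((-1::int) ^ card K)" by simp
  qed simp
  finally have "(\<Sum>K\<in>insert a ` Pow A. (-1::int) ^ card K) = - (\<Sum>K\<in>Pow A. (-1::int) ^ card K)"
    by (simp add: sum_negf)
  moreover have "(\<Sum>K\<in>Pow (insert a A). (-1::int) ^ card K) =
     (\<Sum>K\<in>Pow A. (-1::int) ^ card K) + (\<Sum>K\<in>insert a ` Pow A. (-1::int) ^ card K)"
    unfolding Pow_insert using insert disj by (simp add: sum.union_disjoint)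
  ultimately show ?case by simp
qed

lemma interval_sum:
  assumes "finite V" "U \<subseteq> V"
  shows "(\<Sum>J\<in>{J. U \<subseteq> J \<and> J \<subseteq> V}. (-1::int) ^ (card V - card J)) = (if U = V then 1 else 0)"
proof -
  have img: "{J. U \<subseteq> J \<and> J \<subseteq> V} = (\<lambda>K. V - K) ` Pow (V - U)"
  proof
    show "{J. U \<subseteq> J \<and> J \<subseteq> V} \<subseteq> (\<lambda>K. V - K) ` Pow (V - U)"
    proof
      fix J assume "J \<in> {J. U \<subseteq> J \<and> J \<subseteq> V}"
      then have "J = V - (V - J)" "V - J \<in> Pow (V - U)" by auto
      then show "J \<in> (\<lambda>K. V - K) ` Pow (V - U)" by blast
    qed
  qed (use assms in auto)
  have inj: "inj_on (\<lambda>K. V - K) (Pow (V - U))"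
    by (rule inj_onI) auto
  have "(\<Sum>J\<in>{J. U \<subseteq> J \<and> J \<subseteq> V}. (-1::int) ^ (card V - card J))
      = (\<Sum>K\<in>Pow (V - U). (-1::int) ^ (card V - card (V - K)))"
    unfolding img by (simp add: sum.reindex[OF inj])
  also have "\<dots> = (\<Sum>K\<in>Pow (V - U). (-1::int) ^ card K)"
  proof (rule sum.cong)
    fix K assume "K \<in> Pow (V - U)"
    then have "K \<subseteq> V" by auto
    then have "card V - card (V - K) = card K"
      using assms(1) by (simp add: card_Diff_subset card_mono finite_subset diff_diff_cancel)
    then show "(-1::int) ^ (card V - card (V - K)) = (-1::int) ^ card K" by simp
  qed simp
  also have "\<dots> = (if U = V then 1 else 0)"
    using alt_pow_sum[of "V - U"] assms by auto
  finally show ?thesis .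
qed

lemma finite_edges2: "finite J \<Longrightarrow> finite (edges2 J)"
  unfolding edges2_def by (rule finite_subset[of _ "Pow J"]) auto

lemma edges2_mono: "J \<subseteq> V \<Longrightarrow> edges2 J \<subseteq> edges2 V"
  unfolding edges2_def by auto

definition PP :: "('a set \<Rightarrow> nat) \<Rightarrow> 'a set set \<Rightarrow> int" where
  "PP \<mu> F = (\<Prod>e\<in>F. int (\<mu> e) - 1)"

definition cc :: "'a set \<Rightarrow> 'a set set \<Rightarrow> int" where
  "cc V F = (\<Sum>J\<in>{J. J \<subseteq> V \<and> 2 \<le> card J}. if F \<subseteq> edges2 J then (-1) ^ (card V - card J) else 0)"

lemma prod_expand:
  assumes "finite V" "J \<subseteq> V" "\<forall>e\<in>edges2 V. 0 < \<mu> e"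
  shows "(\<Prod>e\<in>edges2 J. int (\<mu> e)) = (\<Sum>F\<in>Pow (edges2 V). if F \<subseteq> edges2 J then PP \<mu> F else 0)"
proof -
  have fJ: "finite (edges2 J)" using assms finite_edges2 finite_subset by blast
  have "(\<Prod>e\<in>edges2 J. int (\<mu> e)) = (\<Prod>e\<in>edges2 J. (int (\<mu> e) - 1) + 1)" by simp
  also have "\<dots> = (\<Sum>F\<in>Pow (edges2 J). PP \<mu> F)"
    unfolding PP_def using prod_add[OF fJ, of "\<lambda>e. int (\<mu> e) - 1" "\<lambda>_. 1"] by simp
  also have "Pow (edges2 J) = {F \<in> Pow (edges2 V). F \<subseteq> edges2 J}"
    using edges2_mono[OF assms(2)] by auto
  also have "(\<Sum>F\<in>{F \<in> Pow (edges2 V). F \<subseteq> edges2 J}. PP \<mu> F) =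
     (\<Sum>F\<in>Pow (edges2 V). if F \<subseteq> edges2 J then PP \<mu> F else 0)"
    by (rule sum.inter_filter) (use assms finite_edges2 in auto)
  finally show ?thesis .
qed

lemma main_expand:
  assumes "finite V" "\<forall>e\<in>edges2 V. 0 < \<mu> e"
  shows "(\<Sum>J\<in>{J. J \<subseteq> V \<and> 2 \<le> card J}.
        (-1) ^ (card V - card J) * (\<Prod>e\<in>edges2 J. int (\<mu> e)))
       = (\<Sum>F\<in>Pow (edges2 V). cc V F * PP \<mu> F)"
proof -
  have "(\<Sum>J\<in>{J. J \<subseteq> V \<and> 2 \<le> card J}.
        (-1) ^ (card V - card J) * (\<Prod>e\<in>edges2 J. int (\<mu> e)))
     = (\<Sum>J\<in>{J. J \<subseteq> V \<and> 2 \<le> card J}. \<Sum>F\<in>Pow (edges2 V).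
          (if F \<subseteq> edges2 J then (-1) ^ (card V - card J) else 0) * PP \<mu> F)"
  proof (rule sum.cong)
    fix J assume "J \<in> {J. J \<subseteq> V \<and> 2 \<le> card J}"
    then have "J \<subseteq> V" by auto
    then show "(-1) ^ (card V - card J) * (\<Prod>e\<in>edges2 J. int (\<mu> e)) = (\<Sum>F\<in>Pow (edges2 V).
          (if F \<subseteq> edges2 J then (-1) ^ (card V - card J) else 0) * PP \<mu> F)"
      using prod_expand[OF assms(1) _ assms(2)] by (auto simp add: sum_distrib_left intro!: sum.cong)
  qed simp
  also have "\<dots> = (\<Sum>F\<in>Pow (edges2 V). \<Sum>J\<in>{J. J \<subseteq> V \<and> 2 \<le> card J}.
          (if F \<subseteq> edges2 J then (-1) ^ (card V - card J) else 0) * PP \<mu> F)"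
    by (rule sum.swap)
  also have "\<dots> = (\<Sum>F\<in>Pow (edges2 V). cc V F * PP \<mu> F)"
    unfolding cc_def by (simp add: sum_distrib_right)
  finally show ?thesis .
qed

lemma cc_nonneg:
  assumes "finite V" "F \<subseteq> edges2 V" "F \<noteq> {}"
  shows "0 \<le> cc V F"
proof -
  have fin: "finite {J. J \<subseteq> V \<and> 2 \<le> card J}" using assms(1) by simp
  have "cc V F = (\<Sum>J\<in>{J \<in> {J. J \<subseteq> V \<and> 2 \<le> card J}. F \<subseteq> edges2 J}. (-1) ^ (card V - card J))"
    unfolding cc_def by (rule sum.inter_filter[OF fin, symmetric])
  also have "{J \<in> {J. J \<subseteq> V \<and> 2 \<le> card J}. F \<subseteq> edges2 J} = {J. \<Union>F \<subseteq> J \<and> J \<subseteq> V}"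
  proof
    show "{J \<in> {J. J \<subseteq> V \<and> 2 \<le> card J}. F \<subseteq> edges2 J} \<subseteq> {J. \<Union>F \<subseteq> J \<and> J \<subseteq> V}"
      unfolding edges2_def by auto
  next
    show "{J. \<Union>F \<subseteq> J \<and> J \<subseteq> V} \<subseteq> {J \<in> {J. J \<subseteq> V \<and> 2 \<le> card J}. F \<subseteq> edges2 J}"
    proof
      fix J assume J: "J \<in> {J. \<Union>F \<subseteq> J \<and> J \<subseteq> V}"
      obtain e where e: "e \<in> F" using assms(3) by auto
      then have "card e = 2" "e \<subseteq> J" using assms(2) J unfolding edges2_def by auto
      moreover have "finite J" using J assms(1) finite_subset by auto
      ultimately have "2 \<le> card J" using card_mono by metis
      moreover have "F \<subseteq> edges2 J" using J assms(2) unfolding edges2_def by auto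
      ultimately show "J \<in> {J \<in> {J. J \<subseteq> V \<and> 2 \<le> card J}. F \<subseteq> edges2 J}" using J by auto
    qed
  qed
  also have "(\<Sum>J\<in>{J. \<Union>F \<subseteq> J \<and> J \<subseteq> V}. (-1::int) ^ (card V - card J)) = (if \<Union>F = V then 1 else 0)"
    by (rule interval_sum) (use assms in \<open>auto simp: edges2_def\<close>)
  finally show ?thesis by simp
qed

theorem corollary4p8:
  fixes V :: "'a set" and \<mu>1 \<mu>2 :: "'a set \<Rightarrow> nat"
  assumes "finite V"
    and "\<forall>e\<in>edges2 V. 0 < \<mu>1 e"
    and "\<forall>e\<in>edges2 V. 0 < \<mu>2 e"
    and "\<forall>e\<in>edges2 V. \<mu>1 e \<le> \<mu>2 e"
  shows "n_infl \<mu>1 V \<le> n_infl \<mu>2 V"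
proof -
  have "n_infl \<mu>2 V - n_infl \<mu>1 V = (\<Sum>F\<in>Pow (edges2 V). cc V F * (PP \<mu>2 F - PP \<mu>1 F))"
    unfolding n_infl_def main_expand[OF assms(1) assms(2)] main_expand[OF assms(1) assms(3)]
    by (simp add: sum_subtractf algebra_simps)
  also have "\<dots> \<ge> 0"
  proof (rule sum_nonneg)
    fix F assume F: "F \<in> Pow (edges2 V)"
    show "0 \<le> cc V F * (PP \<mu>2 F - PP \<mu>1 F)"
    proof (cases "F = {}")
      case True
      then show ?thesis by (simp add: PP_def)
    next
      case False
      have "PP \<mu>1 F \<le> PP \<mu>2 F" unfolding PP_def
        by (rule prod_mono) (use F assms(2,4) in force)
      then show ?thesis using cc_nonneg[OF assms(1) _ False] F by simp
    qed
  qed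
  finally show ?thesis by simp
qed

end
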